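(* Let $A=\{a,b,c\}$, $\Lambda=\{ab^ic\mid i\geq 1\}$ and $\mathcal{T}_2=\{((ab^ic)^2,\varepsilon)\mid i\ge 1\}$. If $u\in A^\ast$ is $\mathcal{T}_2$-irreducible and invertible in $\Pi_2=\langle a,b,c\mid (ab^ic)^2=1\ (i\geq 1)\rangle$, then $u\in\Lambda^\ast$.
   Context: A word $u$ is $\mathcal{T}_2$-irreducible if it contains no factor of the form $(ab^ic)^2$ with $i\ge1$. A word is invertible in $\Pi_2$ if it represents a unit of $\Pi_2$. $\Lambda^\ast$ is the set of finite concatenations of words from $\Lambda$. *)

theory Defs
  imports Main
begin

datatype letter = a | b | c

type_synonym word = "letter list"

definition abc :: "nat \<Rightarrow> word" where
  "abc i = [a] @ replicate i b @ [c]"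

definition Lambda :: "word set" where
  "Lambda = {abc i | i. i \<ge> 1}"

definition Lambda_star :: "word set" where
  "Lambda_star = {concat ws | ws. set ws \<subseteq> Lambda}"

definition T2 :: "(word \<times> word) set" where
  "T2 = {(abc i @ abc i, []) | i. i \<ge> 1}"

definition T2_irreducible :: "word \<Rightarrow> bool" where
  "T2_irreducible u \<longleftrightarrow> \<not> (\<exists>x y i. i \<ge> 1 \<and> u = x @ (abc i @ abc i) @ y)"

definition T2_step :: "(word \<times> word) set" where
  "T2_step = {(x @ l @ y, x @ r @ y) | x y l r. (l, r) \<in> T2}"

definition Pi2_cong :: "(word \<times> word) set" where
  "Pi2_cong = (T2_step \<union> T2_step\<inverse>)\<^sup>*"

definition Pi2_invertible :: "word \<Rightarrow> bool" where
  "Pi2_invertible u \<longleftrightarrow> (\<exists>v. (u @ v, []) \<in> Pi2_cong \<and> (v @ u, []) \<in> Pi2_cong)"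

end

theory Submission
  imports Defs
begin

definition step :: "word \<Rightarrow> letter \<Rightarrow> word" where
  "step s x = (if \<exists>p i. i \<ge> 1 \<and> s@[x] = p @ abc i @ abc i
     then (SOME p. \<exists>i. i \<ge> 1 \<and> s@[x] = p @ abc i @ abc i) else s@[x])"

definition red :: "word \<Rightarrow> word \<Rightarrow> word" where
  "red s w = foldl step s w"

definition nf :: "word \<Rightarrow> word" where
  "nf w = red [] w"

lemma rb_unique: "replicate i b @ a # X = replicate j b @ a # Y \<Longrightarrow> i = j \<and> X = Y"
proof (induction i arbitrary: j)
  case 0 then show ?case by (cases j) auto
next
  case (Suc i) then show ?case by (cases j) auto
qed

lemma sq_unique: "x @ abc i = y @ abc j \<Longrightarrow> i = j \<and> x = y"
proof -
  assume h: "x @ abc i = y @ abc j"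
  have "rev (x @ abc i) = rev (y @ abc j)" using h by simp
  then have "replicate i b @ a # rev x = replicate j b @ a # rev y"
    by (simp add: abc_def)
  then show ?thesis using rb_unique by blast
qed

lemma sq2_unique: "x @ abc i @ abc i = y @ abc j @ abc j \<Longrightarrow> i = j \<and> x = y"
proof -
  assume "x @ abc i @ abc i = y @ abc j @ abc j"
  then have "(x @ abc i) @ abc i = (y @ abc j) @ abc j" by simp
  then have "i = j" and "x @ abc i = y @ abc j" using sq_unique by blast+
  then show ?thesis using sq_unique by blast
qed

lemma step_red: assumes "i \<ge> 1" "s@[x] = p @ abc i @ abc i" shows "step s x = p"
proof -
  define P where "P = (\<lambda>q. \<exists>i. i \<ge> 1 \<and> s@[x] = q @ abc i @ abc i)"
  have ex: "\<exists>q. P q" unfolding P_def using assms by blast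
  have "P (SOME q. P q)" using ex by (rule someI_ex)
  then obtain j where "s@[x] = (SOME q. P q) @ abc j @ abc j" unfolding P_def by blast
  then have "(SOME q. P q) @ abc j @ abc j = p @ abc i @ abc i" using assms(2) by simp
  then have "(SOME q. P q) = p" using sq2_unique by blast
  moreover have "\<exists>p i. i \<ge> 1 \<and> s@[x] = p @ abc i @ abc i" using assms by blast
  ultimately show ?thesis unfolding step_def P_def by simp
qed

lemma step_cases:
  "(step s x = s@[x] \<and> (\<forall>p i. i \<ge> 1 \<longrightarrow> s@[x] \<noteq> p @ abc i @ abc i))
   \<or> (\<exists>p i. i \<ge> 1 \<and> s@[x] = p @ abc i @ abc i \<and> step s x = p)"
proof (cases "\<exists>p i. i \<ge> 1 \<and> s@[x] = p @ abc i @ abc i")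
  case True
  then obtain p i where "i \<ge> 1" "s@[x] = p @ abc i @ abc i" by blast
  then show ?thesis using step_red by blast
next
  case False
  then show ?thesis unfolding step_def by auto
qed

lemma step_not_c: "x \<noteq> c \<Longrightarrow> step s x = s@[x]"
proof -
  assume "x \<noteq> c"
  have "\<forall>p i. s@[x] \<noteq> p @ abc i @ abc i"
  proof (intro allI notI)
    fix p i assume "s@[x] = p @ abc i @ abc i"
    then have "last (s@[x]) = last (p @ abc i @ abc i)" by simp
    then show False using \<open>x \<noteq> c\<close> by (simp add: abc_def)
  qed
  then show ?thesis unfolding step_def by auto
qed

lemma red_append: "red s (w1@w2) = red (red s w1) w2"
  by (simp add: red_def)

lemma red_Cons: "red s (x#w) = red (step s x) w"
  by (simp add: red_def)

lemma red_Nil: "red s [] = s"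
  by (simp add: red_def)

lemma red_noc: "c \<notin> set w \<Longrightarrow> red s w = s @ w"
proof (induction w arbitrary: s)
  case Nil then show ?case by (simp add: red_Nil)
next
  case (Cons x w)
  then have "step s x = s@[x]" using step_not_c[of x s] by auto
  then show ?case using Cons by (simp add: red_Cons)
qed

lemma red_nil_hd: "red s y = [] \<Longrightarrow> s \<noteq> [] \<Longrightarrow> hd s = a"
proof (induction y arbitrary: s)
  case Nil then show ?case by (simp add: red_Nil)
next
  case (Cons x y)
  have r: "red (step s x) y = []" using Cons.prems by (simp add: red_Cons)
  from step_cases[of s x] show ?case
  proof
    assume "step s x = s@[x] \<and> (\<forall>p i. i \<ge> 1 \<longrightarrow> s@[x] \<noteq> p @ abc i @ abc i)"
    then have "step s x = s@[x]" by blast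
    then have "hd (s@[x]) = a" using Cons.IH[of "s@[x]"] r by simp
    then show ?thesis using Cons.prems by simp
  next
    assume "\<exists>p i. i \<ge> 1 \<and> s@[x] = p @ abc i @ abc i \<and> step s x = p"
    then obtain p i where h: "s@[x] = p @ abc i @ abc i" "step s x = p" by blast
    show ?thesis
    proof (cases "p = []")
      case True
      then have "hd (s@[x]) = a" using h by (simp add: abc_def)
      then show ?thesis using Cons.prems by simp
    next
      case False
      then have "hd p = a" using Cons.IH[of p] r h by simp
      then have "hd (s@[x]) = a" using h False by simp
      then show ?thesis using Cons.prems by simp
    qed
  qed
qed

lemma red_first:
  "red t w = t @ w \<or> (\<exists>w1 w2 p i. i \<ge> 1 \<and> w = w1 @ w2 \<and> t @ w1 = p @ abc i @ abc i)"
proof (induction w arbitrary: t)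
  case Nil then show ?case by (simp add: red_Nil)
next
  case (Cons x w)
  from step_cases[of t x] show ?case
  proof
    assume "step t x = t@[x] \<and> (\<forall>p i. i \<ge> 1 \<longrightarrow> t@[x] \<noteq> p @ abc i @ abc i)"
    then have st: "step t x = t@[x]" by blast
    from Cons.IH[of "t@[x]"] show ?thesis
    proof
      assume "red (t @ [x]) w = (t @ [x]) @ w"
      then show ?thesis using st by (simp add: red_Cons)
    next
      assume "\<exists>w1 w2 p i. i \<ge> 1 \<and> w = w1 @ w2 \<and> (t@[x]) @ w1 = p @ abc i @ abc i"
      then obtain w1 w2 p i where "i \<ge> 1" "w = w1 @ w2" "(t@[x]) @ w1 = p @ abc i @ abc i"
        by blast
      then have "i \<ge> 1 \<and> x # w = (x#w1) @ w2 \<and> t @ (x#w1) = p @ abc i @ abc i" by simp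
      then show ?thesis by blast
    qed
  next
    assume "\<exists>p i. i \<ge> 1 \<and> t@[x] = p @ abc i @ abc i \<and> step t x = p"
    then obtain p i where "i \<ge> 1" "t@[x] = p @ abc i @ abc i" by blast
    then have "i \<ge> 1 \<and> x # w = [x] @ w \<and> t @ [x] = p @ abc i @ abc i" by simp
    then show ?thesis by blast
  qed
qed

lemma irr_factor: "T2_irreducible (x @ u @ y) \<Longrightarrow> T2_irreducible u"
  unfolding T2_irreducible_def
proof (intro notI)
  assume h: "\<not> (\<exists>x' y' i. 1 \<le> i \<and> x @ u @ y = x' @ (abc i @ abc i) @ y')"
  assume "\<exists>x y i. 1 \<le> i \<and> u = x @ (abc i @ abc i) @ y"
  then obtain x1 y1 i where "1 \<le> i" "u = x1 @ (abc i @ abc i) @ y1" by blast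
  then have "1 \<le> i \<and> x @ u @ y = (x @ x1) @ (abc i @ abc i) @ (y1 @ y)" by simp
  then show False using h by blast
qed

lemma irr_step: "T2_irreducible s \<Longrightarrow> T2_irreducible (step s x)"
proof -
  assume irr: "T2_irreducible s"
  from step_cases[of s x] show ?thesis
  proof
    assume h: "step s x = s@[x] \<and> (\<forall>p i. i \<ge> 1 \<longrightarrow> s@[x] \<noteq> p @ abc i @ abc i)"
    show ?thesis unfolding T2_irreducible_def
    proof
      assume "\<exists>y1 y2 i. 1 \<le> i \<and> step s x = y1 @ (abc i @ abc i) @ y2"
      then obtain y1 y2 i where i: "1 \<le> i" and e: "s@[x] = y1 @ (abc i @ abc i) @ y2"
        using h by auto
      show False
      proof (cases "y2 = []")
        case True
        then have "s@[x] = y1 @ abc i @ abc i" using e by simp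
        then show False using h i by blast
      next
        case False
        then have "s = y1 @ (abc i @ abc i) @ butlast y2"
          using e by (metis append_assoc butlast_append butlast_snoc)
        then show False using irr i unfolding T2_irreducible_def by blast
      qed
    qed
  next
    assume "\<exists>p i. i \<ge> 1 \<and> s@[x] = p @ abc i @ abc i \<and> step s x = p"
    then obtain p i where h: "s@[x] = p @ abc i @ abc i" "step s x = p" by blast
    have "s = p @ butlast (abc i @ abc i)" using h
      by (metis append_assoc butlast_append butlast_snoc abc_def append_is_Nil_conv not_Cons_self2)
    then show ?thesis using irr irr_factor[of "[]" p] h by simp
  qed
qed

lemma irr_red: "T2_irreducible s \<Longrightarrow> T2_irreducible (red s w)"
proof (induction w arbitrary: s)
  case Nil then show ?case by (simp add: red_Nil)
next
  case (Cons x w) then show ?case using irr_step by (simp add: red_Cons)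
qed

lemma irr_nil: "T2_irreducible []"
  unfolding T2_irreducible_def by (simp add: abc_def)

lemma nf_irr: "T2_irreducible (nf w)"
  unfolding nf_def using irr_red irr_nil by blast

lemma red_irr_self: "T2_irreducible u \<Longrightarrow> red [] u = u"
proof -
  assume irr: "T2_irreducible u"
  from red_first[of "[]" u] show ?thesis
  proof
    assume "\<exists>w1 w2 p i. i \<ge> 1 \<and> u = w1 @ w2 \<and> [] @ w1 = p @ abc i @ abc i"
    then obtain w1 w2 p i where "i \<ge> 1" "u = p @ (abc i @ abc i) @ w2" by auto
    then show ?thesis using irr unfolding T2_irreducible_def by blast
  qed simp
qed

lemma abc_split: "abc i = (a # replicate i b) @ [c]"
  by (simp add: abc_def)

lemma red_abc: "red s (abc i) = step (s @ a # replicate i b) c"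
proof -
  have "red s (abc i) = red (red s (a # replicate i b)) [c]"
    unfolding abc_split by (rule red_append)
  also have "red s (a # replicate i b) = s @ a # replicate i b"
    by (rule red_noc) auto
  finally show ?thesis by (simp add: red_Cons red_Nil)
qed

lemma snoc_abc: "s @ a # (replicate i b @ [c]) = s @ abc i"
  by (simp add: abc_def)

lemma red_sq: assumes irr: "T2_irreducible s" and i: "i \<ge> 1"
  shows "red s (abc i @ abc i) = s"
proof (cases "\<exists>q. s = q @ abc i")
  case True
  then obtain q where q: "s = q @ abc i" by blast
  have "red s (abc i) = q"
    unfolding red_abc by (rule step_red[OF i]) (simp add: snoc_abc q)
  moreover have "red q (abc i) = s"
  proof -
    from step_cases[of "q @ a # replicate i b" c] show ?thesis
    proof
      assume "\<exists>p j. j \<ge> 1 \<and> (q @ a # replicate i b)@[c] = p @ abc j @ abc j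
         \<and> step (q @ a # replicate i b) c = p"
      then obtain p j where "j \<ge> 1" "q @ abc i = p @ abc j @ abc j"
        by (auto simp: snoc_abc)
      then have "j \<ge> 1 \<and> s = p @ (abc j @ abc j) @ []" using q by simp
      then show ?thesis using irr unfolding T2_irreducible_def by blast
    qed (simp add: red_abc snoc_abc q)
  qed
  ultimately show ?thesis by (simp add: red_append)
next
  case False
  have "red s (abc i) = s @ abc i"
  proof -
    from step_cases[of "s @ a # replicate i b" c] show ?thesis
    proof
      assume "\<exists>p j. j \<ge> 1 \<and> (s @ a # replicate i b)@[c] = p @ abc j @ abc j
         \<and> step (s @ a # replicate i b) c = p"
      then obtain p j where "s @ abc i = (p @ abc j) @ abc j"
        by (auto simp: snoc_abc)
      then have "s = p @ abc j" "i = j" using sq_unique by blast+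
      then show ?thesis using False by blast
    qed (simp add: red_abc snoc_abc)
  qed
  moreover have "red (s @ abc i) (abc i) = s"
    unfolding red_abc by (rule step_red[OF i]) (simp add: abc_def)
  ultimately show ?thesis by (simp add: red_append)
qed

lemma nf_T2_step: "(w1, w2) \<in> T2_step \<Longrightarrow> nf w1 = nf w2"
proof -
  assume "(w1, w2) \<in> T2_step"
  then obtain x y i where "w1 = x @ (abc i @ abc i) @ y" "w2 = x @ y" "i \<ge> 1"
    unfolding T2_step_def T2_def by auto
  moreover have "T2_irreducible (red [] x)" using irr_red irr_nil by blast
  ultimately show ?thesis unfolding nf_def using red_sq by (simp add: red_append)
qed

lemma nf_cong: "(w1, w2) \<in> Pi2_cong \<Longrightarrow> nf w1 = nf w2"
  unfolding Pi2_cong_def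
proof (induction rule: rtrancl_induct)
  case base then show ?case by simp
next
  case (step y z)
  then show ?case using nf_T2_step by auto
qed

lemma cong_sym: "(x, y) \<in> Pi2_cong \<Longrightarrow> (y, x) \<in> Pi2_cong"
proof -
  have "sym (T2_step \<union> T2_step\<inverse>)" by (auto simp: sym_def)
  then have "sym Pi2_cong" unfolding Pi2_cong_def by (rule sym_rtrancl)
  then show "(x, y) \<in> Pi2_cong \<Longrightarrow> (y, x) \<in> Pi2_cong" by (auto simp: sym_def)
qed

lemma cong_trans: "(x, y) \<in> Pi2_cong \<Longrightarrow> (y, z) \<in> Pi2_cong \<Longrightarrow> (x, z) \<in> Pi2_cong"
  unfolding Pi2_cong_def by (rule rtrancl_trans)

lemma T2_step_ctx: "(x, y) \<in> T2_step \<Longrightarrow> (w @ x @ z, w @ y @ z) \<in> T2_step"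
proof -
  assume "(x, y) \<in> T2_step"
  then obtain x1 y1 l r where "x = x1 @ l @ y1" "y = x1 @ r @ y1" "(l, r) \<in> T2"
    unfolding T2_step_def by blast
  then have "w @ x @ z = (w @ x1) @ l @ (y1 @ z) \<and> w @ y @ z = (w @ x1) @ r @ (y1 @ z) \<and> (l, r) \<in> T2"
    by simp
  then show ?thesis unfolding T2_step_def by blast
qed

lemma cong_ctx: "(x, y) \<in> Pi2_cong \<Longrightarrow> (w @ x @ z, w @ y @ z) \<in> Pi2_cong"
  unfolding Pi2_cong_def
proof (induction rule: rtrancl_induct)
  case base then show ?case by simp
next
  case (step y1 z1)
  then have "(w @ y1 @ z, w @ z1 @ z) \<in> T2_step \<union> T2_step\<inverse>"
    using T2_step_ctx by auto
  then show ?case using step.IH by (rule rtrancl_into_rtrancl[rotated])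
qed

lemma cong_sq: "i \<ge> 1 \<Longrightarrow> (p @ abc i @ abc i @ q, p @ q) \<in> Pi2_cong"
proof -
  assume "i \<ge> 1"
  then have "(p @ (abc i @ abc i) @ q, p @ [] @ q) \<in> T2_step"
    unfolding T2_step_def T2_def by blast
  then show ?thesis unfolding Pi2_cong_def by auto
qed

lemma suffix_no_a: "xs @ ys = replicate i b @ [c] \<Longrightarrow> ys \<noteq> [] \<Longrightarrow> hd ys \<noteq> a"
proof -
  assume h: "xs @ ys = replicate i b @ [c]" "ys \<noteq> []"
  have "hd ys \<in> set ys" using h(2) by simp
  also have "set ys \<subseteq> set (replicate i b @ [c])" using h(1) by (metis set_append Un_upper2)
  finally show ?thesis by (cases i) auto
qed

lemma first_block:
  assumes e: "t @ u1 = p @ abc i @ abc i" and ne: "u1 \<noteq> []" and h: "hd u1 = a"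
    and irr: "T2_irreducible u1" and irrt: "T2_irreducible t" and i: "i \<ge> 1"
  shows "u1 = abc i"
proof -
  obtain us where
    "t = p @ us \<and> us @ u1 = abc i @ abc i \<or> t @ us = p \<and> u1 = us @ abc i @ abc i"
    using append_eq_append_conv2[of t u1 p "abc i @ abc i"] e by blast
  then show ?thesis
  proof
    assume "t @ us = p \<and> u1 = us @ abc i @ abc i"
    then have "u1 = us @ (abc i @ abc i) @ []" by simp
    then show ?thesis using irr i unfolding T2_irreducible_def by blast
  next
    assume "t = p @ us \<and> us @ u1 = abc i @ abc i"
    then have e2: "us @ u1 = abc i @ abc i" by blast
    from e2[unfolded append_eq_append_conv2] obtain vs where
      "us = abc i @ vs \<and> vs @ u1 = abc i \<or> us @ vs = abc i \<and> u1 = vs @ abc i" by blast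
    then show ?thesis
    proof
      assume h2: "us = abc i @ vs \<and> vs @ u1 = abc i"
      show ?thesis
      proof (cases vs)
        case Nil then show ?thesis using h2 by simp
      next
        case (Cons v vs')
        then have "vs' @ u1 = replicate i b @ [c]" using h2 by (simp add: abc_def)
        then show ?thesis using suffix_no_a ne h by blast
      qed
    next
      assume h2: "us @ vs = abc i \<and> u1 = vs @ abc i"
      show ?thesis
      proof (cases "vs = []")
        case True then show ?thesis using h2 by simp
      next
        case False
        then have hv: "hd vs = a" using h h2 by simp
        show ?thesis
        proof (cases us)
          case Nil
          then have "u1 = [] @ (abc i @ abc i) @ []" using h2 by simp
          then show ?thesis using irr i unfolding T2_irreducible_def by blast
        next
          case (Cons w us')
          then have "us' @ vs = replicate i b @ [c]" using h2 by (simp add: abc_def)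
          then show ?thesis using suffix_no_a False hv by blast
        qed
      qed
    qed
  qed
qed

theorem mainTheorem7:
  fixes u :: word
  assumes "T2_irreducible u"
    and "Pi2_invertible u"
  shows "u \<in> Lambda_star"
  using assms
proof (induction "length u" arbitrary: u rule: less_induct)
  case less
  show ?case
  proof (cases "u = []")
    case True
    then have "u = concat [] \<and> set [] \<subseteq> Lambda" by simp
    then show ?thesis unfolding Lambda_star_def by blast
  next
    case False
    from less.prems(2) obtain v where uv: "(u@v, []) \<in> Pi2_cong" and vu: "(v@u, []) \<in> Pi2_cong"
      unfolding Pi2_invertible_def by blast
    have nfu: "red [] u = u" using red_irr_self less.prems(1) by blast
    have "nf (u@v) = nf []" using nf_cong[OF uv] .
    then have "red u v = []" using nfu by (simp add: nf_def red_append red_Nil)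
    then have hu: "hd u = a" using red_nil_hd False by blast
    have "nf (v@u) = nf []" using nf_cong[OF vu] .
    then have rv: "red (nf v) u = []" by (simp add: nf_def red_append red_Nil)
    from red_first[of "nf v" u] obtain u1 u2 p i where
      i: "i \<ge> 1" and uu: "u = u1 @ u2" and e: "nf v @ u1 = p @ abc i @ abc i"
      using rv False by auto
    have ne: "u1 \<noteq> []"
    proof
      assume "u1 = []"
      then have "nf v = p @ (abc i @ abc i) @ []" using e by simp
      then show False using nf_irr[of v] i unfolding T2_irreducible_def by blast
    qed
    have h1: "hd u1 = a" using hu uu ne by simp
    have irr1: "T2_irreducible u1" using irr_factor[of "[]" u1 u2] less.prems(1) uu by simp
    have u1: "u1 = abc i" using first_block[OF e ne h1 irr1 nf_irr i] .
    let ?S = "abc i"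
    have irr2: "T2_irreducible u2" using irr_factor[of u1 u2 "[]"] less.prems(1) uu by simp
    have inv2: "Pi2_invertible u2"
      unfolding Pi2_invertible_def
    proof (intro exI conjI)
      have "(u2 @ v @ ?S, ?S @ ?S @ u2 @ v @ ?S) \<in> Pi2_cong"
        using cong_sym[OF cong_sq[OF i, of "[]" "u2 @ v @ ?S"]] by simp
      moreover have "(?S @ (u @ v) @ ?S, ?S @ [] @ ?S) \<in> Pi2_cong"
        using cong_ctx[OF uv] .
      moreover have "(?S @ [] @ ?S, []) \<in> Pi2_cong"
        using cong_sq[OF i, of "[]" "[]"] by simp
      ultimately show "(u2 @ v @ ?S, []) \<in> Pi2_cong"
        using uu u1 cong_trans by (metis append_assoc)
      show "((v @ ?S) @ u2, []) \<in> Pi2_cong" using vu uu u1 by simp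
    qed
    have "length u2 < length u" using uu ne by simp
    then have "u2 \<in> Lambda_star" using less.hyps irr2 inv2 by blast
    then obtain ws where ws: "u2 = concat ws" "set ws \<subseteq> Lambda"
      unfolding Lambda_star_def by blast
    have "?S \<in> Lambda" unfolding Lambda_def using i by blast
    then have "u = concat (?S # ws) \<and> set (?S # ws) \<subseteq> Lambda" using ws uu u1 by simp
    then show ?thesis unfolding Lambda_star_def by blast
  qed
qed

end
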